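(* For every odd $n\ge1$ the homogenized operator $a_n^*$ vanishes; that is, $a^*_{2m+1}=0$ for all integers $m\ge0$.
   Context: Let $d\ge1$, ${\mathbb T}^d$ the unit torus. Let $\rho\in L^\infty({\mathbb T}^d)$ be real valued and $a\in L^\infty({\mathbb T}^d)$ take values in real symmetric $d\times d$ matrices, with $m_1>0$ such that $a(y)\xi\cdot\xi\ge m_1|\xi|^2$ for all $\xi$ and $\rho(y)\ge m_1$ a.e. For $g(t,x,y)$ periodic in $y$, $(\pi g)(t,x)=\frac1{|{\mathbb T}^d|}\int_{{\mathbb T}^d}g(t,x,y)dy$. ${\mathcal A}_{yy}=\mathrm{div}_y a(y)\mathrm{grad}_y$, ${\mathcal A}_{xx}=\mathrm{div}_x a(y)\mathrm{grad}_x$, ${\mathcal A}_{xy}=\mathrm{div}_x a(y)\mathrm{grad}_y+\mathrm{div}_y a(y)\mathrm{grad}_x$; ${\mathcal A}_{yy}^{-1}$ is the inverse of the bijection ${\mathcal A}_{yy}:(I-\pi)H^1({\mathbb T}^d)\to(I-\pi)H^{-1}({\mathbb T}^d)$. Operators from functions of $(t,x)$ to functions of $(t,x,y)$: $\chi_{-1}=0$, $\chi_0=I$, and for $k\ge1$, $\chi_k=-{\mathcal A}_{yy}^{-1}(I-\pi)[{\mathcal A}_{xy}\chi_{k-1}+({\mathcal A}_{xx}-\rho(y)\partial_t^2)\chi_{k-2}]$. For $n\ge1$ the homogenized operator of order $n$ is the constant-coefficient operator $a_n^*(\partial_t,\partial_x)=\pi\big((\rho(y)\partial_t^2-{\mathcal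 A}_{xx})\chi_{n-2}-{\mathcal A}_{xy}\chi_{n-1}\big)$. *)

theory Defs
  imports "HOL-Analysis.Analysis"
begin

text \<open>Unit torus T^d realised as 1-periodic functions on real^'d; fundamental cell = unit cube
  (so |T^d| = 1).\<close>

definition cube :: "(real^'d) set" where
  "cube = cbox 0 One"

definition periodic :: "(real^'d \<Rightarrow> 'b) \<Rightarrow> bool" where
  "periodic f \<longleftrightarrow> (\<forall>y i. f (y + axis i 1) = f y)"

text \<open>Mean value pi f = (1/|T^d|) * integral over the torus.\<close>
definition tmean :: "(real^'d \<Rightarrow> real) \<Rightarrow> real" where
  "tmean f = (LINT y:cube|lborel. f y)"

definition L2_tor :: "(real^'d \<Rightarrow> real) \<Rightarrow> bool" where
  "L2_tor f \<longleftrightarrow> f \<in> borel_measurable lborel \<and> set_integrable lborel cube (\<lambda>y. (f y)^2)"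

definition test_fun :: "(real^'d \<Rightarrow> real) \<Rightarrow> bool" where
  "test_fun \<phi> \<longleftrightarrow> periodic \<phi> \<and> (\<forall>y. \<phi> differentiable (at y)) \<and>
     (\<forall>j. continuous_on UNIV (\<lambda>y. frechet_derivative \<phi> (at y) (axis j 1)))"

definition weak_grad :: "(real^'d \<Rightarrow> real) \<Rightarrow> (real^'d \<Rightarrow> real^'d) \<Rightarrow> bool" where
  "weak_grad f G \<longleftrightarrow> periodic f \<and> periodic G \<and> L2_tor f \<and> (\<forall>j. L2_tor (\<lambda>y. G y $ j)) \<and>
     (\<forall>\<phi> j. test_fun \<phi> \<longrightarrow>
        (LINT y:cube|lborel. f y * frechet_derivative \<phi> (at y) (axis j 1))
        = - (LINT y:cube|lborel. G y $ j * \<phi> y))"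

text \<open>The element g0 + div_y F of H^{-1}(T^d), paired with psi in H^1 having weak gradient Dpsi.\<close>
definition hm1_pair :: "(real^'d \<Rightarrow> real) \<Rightarrow> (real^'d \<Rightarrow> real^'d) \<Rightarrow>
    (real^'d \<Rightarrow> real) \<Rightarrow> (real^'d \<Rightarrow> real^'d) \<Rightarrow> real" where
  "hm1_pair g0 F \<psi> D\<psi> = (LINT y:cube|lborel. g0 y * \<psi> y) - (LINT y:cube|lborel. F y \<bullet> D\<psi> y)"

text \<open>Symbols: with d_t -> tau, grad_x -> xi, chi_k acts on exp(tau t + xi.x) as multiplication
  by N k (a function of y) with weak gradient G k.  cell_seq expresses the recursive definition
  chi_k = -A_yy^{-1}(I-pi)[A_xy chi_{k-1} + (A_xx - rho d_t^2) chi_{k-2}] in weak form.\<close>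
definition cell_seq :: "(real^'d \<Rightarrow> real^'d^'d) \<Rightarrow> (real^'d \<Rightarrow> real) \<Rightarrow> real \<Rightarrow> real^'d \<Rightarrow>
    (int \<Rightarrow> real^'d \<Rightarrow> real) \<Rightarrow> (int \<Rightarrow> real^'d \<Rightarrow> real^'d) \<Rightarrow> bool" where
  "cell_seq a \<rho> \<tau> \<xi> N G \<longleftrightarrow>
     N (-1) = (\<lambda>_. 0) \<and> G (-1) = (\<lambda>_. 0) \<and> N 0 = (\<lambda>_. 1) \<and> G 0 = (\<lambda>_. 0) \<and>
     (\<forall>k\<ge>1. weak_grad (N k) (G k) \<and> tmean (N k) = 0 \<and>
        (\<forall>\<phi> D\<phi>. weak_grad \<phi> D\<phi> \<longrightarrow>
           (LINT y:cube|lborel. (a y *v G k y) \<bullet> D\<phi> y)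
           = hm1_pair
               (\<lambda>y. \<xi> \<bullet> (a y *v G (k-1) y) + (\<xi> \<bullet> (a y *v \<xi>) - \<rho> y * \<tau>^2) * N (k-2) y)
               (\<lambda>y. N (k-1) y *\<^sub>R (a y *v \<xi>))
               (\<lambda>y. \<phi> y - tmean \<phi>) D\<phi>))"

text \<open>Symbol of a_n^*: pi((rho d_t^2 - A_xx) chi_{n-2} - A_xy chi_{n-1}), where pi of an
  H^{-1} element is its pairing with the constant 1.\<close>
definition astar :: "(real^'d \<Rightarrow> real^'d^'d) \<Rightarrow> (real^'d \<Rightarrow> real) \<Rightarrow> real \<Rightarrow> real^'d \<Rightarrow>
    (int \<Rightarrow> real^'d \<Rightarrow> real) \<Rightarrow> (int \<Rightarrow> real^'d \<Rightarrow> real^'d) \<Rightarrow> int \<Rightarrow> real" where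
  "astar a \<rho> \<tau> \<xi> N G n =
     hm1_pair
       (\<lambda>y. (\<rho> y * \<tau>^2 - \<xi> \<bullet> (a y *v \<xi>)) * N (n-2) y - \<xi> \<bullet> (a y *v G (n-1) y))
       (\<lambda>y. - (N (n-1) y *\<^sub>R (a y *v \<xi>)))
       (\<lambda>_. 1) (\<lambda>_. 0)"

end

theory Submission
  imports Defs
begin

lemma cube_sets[measurable]: "cube \<in> sets lborel"
  unfolding cube_def by (simp add: borel_closed)

lemma cube_fin: "emeasure lborel cube < \<infinity>"
  unfolding cube_def by (rule emeasure_lborel_cbox_finite)

lemma L2_prod:
  fixes f g :: "real^'d \<Rightarrow> real"
  assumes "L2_tor f" "L2_tor g" shows "set_integrable lborel cube (\<lambda>y. f y * g y)"
proof -
  have m: "f \<in> borel_measurable lborel" "g \<in> borel_measurable lborel"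
    and i: "set_integrable lborel cube (\<lambda>y. (f y)^2)" "set_integrable lborel cube (\<lambda>y. (g y)^2)"
    using assms unfolding L2_tor_def by auto
  have "set_integrable lborel cube (\<lambda>y. (f y)^2 + (g y)^2)"
    using i by (rule set_integral_add)
  then show ?thesis unfolding set_integrable_def
  proof (rule Bochner_Integration.integrable_bound)
    show "(\<lambda>x. indicat_real cube x *\<^sub>R (f x * g x)) \<in> borel_measurable lborel"
      using m by measurable
    show "AE x in lborel. norm (indicat_real cube x *\<^sub>R (f x * g x)) \<le> norm (indicat_real cube x *\<^sub>R ((f x)\<^sup>2 + (g x)\<^sup>2))"
    proof (rule AE_I2)
      fix x
      have "\<bar>f x * g x\<bar> \<le> (f x)^2 + (g x)^2"
      proof -
        have "0 \<le> (\<bar>f x\<bar> - \<bar>g x\<bar>)^2" by simp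
        then have "2 * (\<bar>f x\<bar> * \<bar>g x\<bar>) \<le> (f x)^2 + (g x)^2"
          by (simp add: power2_diff power2_abs)
        moreover have "0 \<le> \<bar>f x\<bar> * \<bar>g x\<bar>" by simp
        ultimately show ?thesis unfolding abs_mult by linarith
      qed
      then show "norm (indicat_real cube x *\<^sub>R (f x * g x)) \<le> norm (indicat_real cube x *\<^sub>R ((f x)\<^sup>2 + (g x)\<^sup>2))"
        by (auto simp: indicator_def)
    qed
  qed
qed

lemma L2_bmult:
  fixes f b :: "real^'d \<Rightarrow> real"
  assumes "b \<in> borel_measurable lborel" "AE y in lborel. \<bar>b y\<bar> \<le> B" "L2_tor f"
  shows "L2_tor (\<lambda>y. b y * f y)"
proof -
  have m: "f \<in> borel_measurable lborel"
    and i: "set_integrable lborel cube (\<lambda>y. (f y)^2)"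
    using assms unfolding L2_tor_def by auto
  have "set_integrable lborel cube (\<lambda>y. B^2 * (f y)^2)"
    using i by (rule set_integrable_mult_right)
  then have "set_integrable lborel cube (\<lambda>y. (b y * f y)^2)" unfolding set_integrable_def
  proof (rule Bochner_Integration.integrable_bound)
    show "(\<lambda>x. indicat_real cube x *\<^sub>R (b x * f x)^2) \<in> borel_measurable lborel"
      using m assms(1) by measurable
    show "AE x in lborel. norm (indicat_real cube x *\<^sub>R (b x * f x)^2) \<le> norm (indicat_real cube x *\<^sub>R (B^2 * (f x)\<^sup>2))"
      using assms(2)
    proof (rule AE_mp, intro AE_I2 impI)
      fix x assume h: "\<bar>b x\<bar> \<le> B"
      have "(b x)^2 \<le> B^2" using h by (meson abs_ge_zero abs_le_square_iff order_trans power2_le_iff_abs_le)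
      then have "(b x * f x)^2 \<le> B^2 * (f x)^2"
        by (simp add: power_mult_distrib mult_right_mono)
      then show "norm (indicat_real cube x *\<^sub>R (b x * f x)^2) \<le> norm (indicat_real cube x *\<^sub>R (B^2 * (f x)\<^sup>2))"
        by (auto simp: indicator_def)
    qed
  qed
  then show ?thesis using m assms(1) unfolding L2_tor_def by auto
qed

lemma L2_add:
  fixes f g :: "real^'d \<Rightarrow> real"
  assumes "L2_tor f" "L2_tor g" shows "L2_tor (\<lambda>y. f y + g y)"
proof -
  have m: "f \<in> borel_measurable lborel" "g \<in> borel_measurable lborel"
    and i: "set_integrable lborel cube (\<lambda>y. (f y)^2)" "set_integrable lborel cube (\<lambda>y. (g y)^2)"
    using assms unfolding L2_tor_def by auto
  have "set_integrable lborel cube (\<lambda>y. 2 * ((f y)^2 + (g y)^2))"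
    using set_integral_add(1)[OF i] by (rule set_integrable_mult_right)
  then have "set_integrable lborel cube (\<lambda>y. (f y + g y)^2)" unfolding set_integrable_def
  proof (rule Bochner_Integration.integrable_bound)
    show "(\<lambda>x. indicat_real cube x *\<^sub>R (f x + g x)^2) \<in> borel_measurable lborel"
      using m by measurable
    show "AE x in lborel. norm (indicat_real cube x *\<^sub>R (f x + g x)^2) \<le> norm (indicat_real cube x *\<^sub>R (2 * ((f x)^2 + (g x)\<^sup>2)))"
    proof (rule AE_I2)
      fix x
      have "(f x + g x)^2 \<le> 2 * ((f x)^2 + (g x)\<^sup>2)"
      proof -
        have "0 \<le> (f x - g x)^2" by simp
        then show ?thesis by (simp add: power2_diff power2_sum)
      qed
      then show "norm (indicat_real cube x *\<^sub>R (f x + g x)^2) \<le> norm (indicat_real cube x *\<^sub>R (2 * ((f x)^2 + (g x)\<^sup>2)))"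
        by (auto simp: indicator_def)
    qed
  qed
  then show ?thesis using m unfolding L2_tor_def by auto
qed

lemma L2_sum:
  fixes f :: "'i \<Rightarrow> real^'d \<Rightarrow> real"
  assumes "finite S" "\<And>i. i \<in> S \<Longrightarrow> L2_tor (f i)" shows "L2_tor (\<lambda>y. \<Sum>i\<in>S. f i y)"
  using assms
proof (induction S rule: finite_induct)
  case empty
  then show ?case by (simp add: L2_tor_def set_integrable_def)
next
  case (insert x F)
  then show ?case by (simp add: L2_add)
qed

lemma L2_const: "L2_tor (\<lambda>y::real^'d. c)"
proof -
  have "integrable lborel (\<lambda>y::real^'d. c^2 * indicat_real cube y)"
    using integrable_mult_right[OF integrable_real_indicator[OF cube_sets cube_fin], of "c^2"] by simp
  then show ?thesis unfolding L2_tor_def set_integrable_def by (simp add: mult.commute)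
qed


lemma sign_rev:
  assumes "j < (L::nat)"
  shows "(-1::real)^(L - Suc j) = (if even L then - ((-1)^j) else (-1)^j)"
proof -
  have LL: "L = (L - Suc j) + j + 1" using assms by simp
  have "(-1::real)^L = (-1)^((L - Suc j) + j + 1)"
    by (rule arg_cong[where f="\<lambda>k. (-1::real)^k"]) (rule LL)
  also have "\<dots> = (-1::real)^(L - Suc j) * (-1)^j * (-1)"
    by (simp only: power_add power_one_right)
  finally have "(-1::real)^(L - Suc j) * (-1)^j * (-1) = (-1)^L" by simp
  moreover have "(-1::real)^j * (-1)^j = 1" by (simp add: power_add[symmetric] flip: power_mult_distrib)
  ultimately have "(-1::real)^(L - Suc j) = - ((-1)^L) * (-1)^j"
    by (metis (no_types, lifting) mult.commute mult.left_commute mult_minus1 mult_1 minus_mult_minus)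
  then show ?thesis by auto
qed

lemma sum_rev_zero:
  fixes g :: "nat \<Rightarrow> real"
  assumes "\<And>j. j < L \<Longrightarrow> g (L - Suc j) = - g j" shows "(\<Sum>j<L. g j) = 0"
proof -
  have "(\<Sum>j<L. g j) = (\<Sum>j<L. g (L - Suc j))" by (rule sum.nat_diff_reindex[symmetric])
  also have "\<dots> = (\<Sum>j<L. - g j)" using assms by (intro sum.cong) auto
  also have "\<dots> = - (\<Sum>j<L. g j)" by (simp add: sum_negf)
  finally show ?thesis by simp
qed

lemma alg:
  fixes B P M R :: "int \<Rightarrow> int \<Rightarrow> real" and t :: real
  assumes Bs: "\<And>k j. B k j = B j k" and Ms: "\<And>k j. M k j = M j k" and Rs: "\<And>k j. R k j = R j k"
  and B0: "\<And>k. B k 0 = 0" and P0: "\<And>k. P k 0 = 0"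
  and Mm: "\<And>j. M (-1) j = 0" and Rm: "\<And>j. R (-1) j = 0"
  and E: "\<And>k j. k \<ge> 1 \<Longrightarrow> j \<ge> 1 \<Longrightarrow> B k j - P j (k-1) + P (k-1) j - M (k-2) j + t * R (k-2) j = 0"
  and n: "odd n"
  shows "- P 0 (int n-1) - M (int n-2) 0 + t * R (int n-2) 0 = 0"
proof -
  define F where "F k j = B k j - P j (k-1) + P (k-1) j - M (k-2) j + t * R (k-2) j" for k j
  obtain n' where n': "n = Suc n'" using n by (cases n) auto
  have "(\<Sum>j<n. (-1::real)^j * F (int n - int j) (int j)) = F (int n) 0 + (\<Sum>j<n'. (-1::real)^Suc j * F (int n - int (Suc j)) (int (Suc j)))"
    unfolding n' by (subst sum.lessThan_Suc_shift) simp
  also have "(\<Sum>j<n'. (-1::real)^Suc j * F (int n - int (Suc j)) (int (Suc j))) = 0"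
    by (rule sum.neutral) (auto simp: F_def n' intro!: E)
  also have "F (int n) 0 = - P 0 (int n-1) - M (int n-2) 0 + t * R (int n-2) 0"
    by (simp add: F_def B0 P0)
  finally have main: "(\<Sum>j<n. (-1::real)^j * F (int n - int j) (int j)) = - P 0 (int n-1) - M (int n-2) 0 + t * R (int n-2) 0" by simp
  define gB where "gB j = (-1::real)^j * B (int n - int j) (int j)" for j
  define gP where "gP j = (-1::real)^j * (P (int n - int j - 1) (int j) - P (int j) (int n - int j - 1))" for j
  define gM where "gM j = (-1::real)^j * M (int n - int j - 2) (int j)" for j
  define gR where "gR j = (-1::real)^j * R (int n - int j - 2) (int j)" for j
  have split: "(-1::real)^j * F (int n - int j) (int j) = gB j + gP j - gM j + t * gR j" for j
    by (simp add: F_def gB_def gP_def gM_def gR_def algebra_simps)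
  have SB1: "(\<Sum>j<Suc n. gB j) = 0"
  proof (rule sum_rev_zero)
    fix j assume j: "j < Suc n"
    then have e: "int (n - j) = int n - int j" by simp
    show "gB (Suc n - Suc j) = - gB j"
      using j sign_rev[OF j] n unfolding gB_def by (simp add: e Bs[of "int j"])
  qed
  have SB: "(\<Sum>j<n. gB j) = 0" using SB1 by (simp add: gB_def Bs[of 0] B0)
  have SP: "(\<Sum>j<n. gP j) = 0"
  proof (rule sum_rev_zero)
    fix j assume j: "j < n"
    then have e: "int (n - Suc j) = int n - int j - 1" by simp
    show "gP (n - Suc j) = - gP j"
      using j sign_rev[OF j] n unfolding gP_def by (simp add: e algebra_simps)
  qed
  have SM1: "(\<Sum>j<n'. gM j) = 0"
  proof (rule sum_rev_zero)
    fix j assume j: "j < n'"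
    then have e: "int (n' - Suc j) = int n - int j - 2" using n' by simp
    show "gM (n' - Suc j) = - gM j"
      using j sign_rev[OF j] n n' unfolding gM_def by (simp add: e Ms[of "int j"])
  qed
  have SM: "(\<Sum>j<n. gM j) = 0" using SM1 n' by (simp add: gM_def Mm)
  have SR1: "(\<Sum>j<n'. gR j) = 0"
  proof (rule sum_rev_zero)
    fix j assume j: "j < n'"
    then have e: "int (n' - Suc j) = int n - int j - 2" using n' by simp
    show "gR (n' - Suc j) = - gR j"
      using j sign_rev[OF j] n n' unfolding gR_def by (simp add: e Rs[of "int j"])
  qed
  have SR: "(\<Sum>j<n. gR j) = 0" using SR1 n' by (simp add: gR_def Rm)
  have "(\<Sum>j<n. (-1::real)^j * F (int n - int j) (int j)) = (\<Sum>j<n. gB j) + (\<Sum>j<n. gP j) - (\<Sum>j<n. gM j) + t * (\<Sum>j<n. gR j)"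
    by (simp add: split sum.distrib sum_subtractf sum_distrib_left)
  then show ?thesis using main SB SP SM SR by simp
qed


lemma inner_mv_expand:
  fixes A :: "real^'d^'d"
  shows "\<xi> \<bullet> (A *v v) = (\<Sum>i\<in>UNIV. \<Sum>l\<in>UNIV. (\<xi>$i * A$i$l) * v$l)"
  by (simp add: inner_vec_def matrix_vector_mult_def sum_distrib_left mult.assoc)

lemma mv_sym:
  fixes A :: "real^'d^'d"
  assumes "transpose A = A"
  shows "(A *v u) \<bullet> v = (A *v v) \<bullet> u"
proof -
  have s: "A$i$l = A$l$i" for i l
    by (metis assms transpose_def vec_lambda_beta)
  have "(A *v u) \<bullet> v = (\<Sum>i\<in>UNIV. \<Sum>l\<in>UNIV. A$i$l * u$l * v$i)"
    by (simp add: inner_vec_def matrix_vector_mult_def sum_distrib_right)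
  also have "\<dots> = (\<Sum>l\<in>UNIV. \<Sum>i\<in>UNIV. A$i$l * u$l * v$i)" by (rule sum.swap)
  also have "\<dots> = (\<Sum>l\<in>UNIV. \<Sum>i\<in>UNIV. A$l$i * v$i * u$l)"
    by (intro sum.cong refl) (subst s, simp add: ac_simps)
  also have "\<dots> = (A *v v) \<bullet> u"
    by (simp add: inner_vec_def matrix_vector_mult_def sum_distrib_right)
  finally show ?thesis .
qed

lemma vec_comp_meas:
  fixes f :: "'x \<Rightarrow> ('a::real_normed_vector)^'n"
  shows "f \<in> borel_measurable M \<Longrightarrow> (\<lambda>x. f x $ i) \<in> borel_measurable M"
  by (rule borel_measurable_continuous_on[OF linear_continuous_on[OF bounded_linear_vec_nth]])

lemma L2_inner_mv:
  fixes a :: "real^'d \<Rightarrow> real^'d^'d" and V :: "real^'d \<Rightarrow> real^'d"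
  assumes am: "a \<in> borel_measurable lborel" and ab: "AE y in lborel. \<forall>i j. \<bar>a y $ i $ j\<bar> \<le> B"
    and V: "\<And>l. L2_tor (\<lambda>y. V y $ l)"
  shows "L2_tor (\<lambda>y. \<xi> \<bullet> (a y *v V y))"
proof -
  have "L2_tor (\<lambda>y. \<Sum>i\<in>UNIV. \<Sum>l\<in>UNIV. (\<xi>$i * a y$i$l) * V y$l)"
  proof (rule L2_sum[where f="\<lambda>i y. \<Sum>l\<in>UNIV. (\<xi>$i * a y$i$l) * V y$l"], simp)
    fix i
    show "L2_tor (\<lambda>y. \<Sum>l\<in>UNIV. (\<xi>$i * a y$i$l) * V y$l)"
    proof (rule L2_sum[where f="\<lambda>l y. (\<xi>$i * a y$i$l) * V y$l"], simp)
    fix l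
    show "L2_tor (\<lambda>y. (\<xi>$i * a y$i$l) * V y$l)"
    proof (rule L2_bmult[OF _ _ V])
      show "(\<lambda>y. \<xi> $ i * a y $ i $ l) \<in> borel_measurable lborel"
        using vec_comp_meas[OF vec_comp_meas[OF am]] by simp
      show "AE y in lborel. \<bar>\<xi> $ i * a y $ i $ l\<bar> \<le> \<bar>\<xi> $ i\<bar> * B"
        using ab by eventually_elim (simp add: abs_mult mult_left_mono)
    qed
    qed
  qed
  then show ?thesis by (simp add: inner_mv_expand)
qed


theorem theorem2p13:
  fixes a :: "real^'d \<Rightarrow> real^'d^'d" and \<rho> :: "real^'d \<Rightarrow> real" and m1 :: real
    and \<tau> :: real and \<xi> :: "real^'d"
    and N :: "int \<Rightarrow> real^'d \<Rightarrow> real" and G :: "int \<Rightarrow> real^'d \<Rightarrow> real^'d"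
  assumes "periodic a" and "periodic \<rho>"
    and "a \<in> borel_measurable lborel" and "\<rho> \<in> borel_measurable lborel"
    and "\<exists>B. AE y in lborel. \<forall>i j. \<bar>a y $ i $ j\<bar> \<le> B"
    and "\<exists>B. AE y in lborel. \<bar>\<rho> y\<bar> \<le> B"
    and "\<forall>y. transpose (a y) = a y"
    and "m1 > 0"
    and "AE y in lborel. \<forall>\<zeta>. \<zeta> \<bullet> (a y *v \<zeta>) \<ge> m1 * (norm \<zeta>)^2"
    and "AE y in lborel. \<rho> y \<ge> m1"
    and "cell_seq a \<rho> \<tau> \<xi> N G"
  shows "\<forall>m::nat. astar a \<rho> \<tau> \<xi> N G (2 * int m + 1) = 0"
proof
  fix m :: nat
  note cs = assms(11)[unfolded cell_seq_def]
  have Nm1: "N (-1) = (\<lambda>_. 0)" and Gm1: "G (-1) = (\<lambda>_. 0)" and N0: "N 0 = (\<lambda>_. 1)"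
    and G0: "G 0 = (\<lambda>_. 0)" using cs by auto
  have cell: "\<forall>k\<ge>1. weak_grad (N k) (G k) \<and> tmean (N k) = 0 \<and>
        (\<forall>\<phi> D\<phi>. weak_grad \<phi> D\<phi> \<longrightarrow>
           (LINT y:cube|lborel. (a y *v G k y) \<bullet> D\<phi> y)
           = hm1_pair
               (\<lambda>y. \<xi> \<bullet> (a y *v G (k-1) y) + (\<xi> \<bullet> (a y *v \<xi>) - \<rho> y * \<tau>^2) * N (k-2) y)
               (\<lambda>y. N (k-1) y *\<^sub>R (a y *v \<xi>))
               (\<lambda>y. \<phi> y - tmean \<phi>) D\<phi>)" using cs by blast
  obtain Ba where Ba: "AE y in lborel. \<forall>i j. \<bar>a y $ i $ j\<bar> \<le> Ba" using assms(5) by blast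
  obtain Br where Br: "AE y in lborel. \<bar>\<rho> y\<bar> \<le> Br" using assms(6) by blast
  have L2NG: "L2_tor (N k) \<and> (\<forall>l. L2_tor (\<lambda>y. G k y $ l))" if "k \<ge> -1" for k
  proof (cases "k \<ge> 1")
    case True
    then have "weak_grad (N k) (G k)" using cell by blast
    then show ?thesis unfolding weak_grad_def by auto
  next
    case False
    then have "k = -1 \<or> k = 0" using that by auto
    then show ?thesis using L2_const[of 0] L2_const[of 1] by (auto simp: Nm1 Gm1 N0 G0)
  qed
  have L2N: "L2_tor (N k)" if "k \<ge> -1" for k using L2NG[OF that] by blast
  have L2G: "L2_tor (\<lambda>y. G k y $ l)" if "k \<ge> -1" for k l using L2NG[OF that] by blast
  have L2aG: "L2_tor (\<lambda>y. \<xi> \<bullet> (a y *v G k y))" if "k \<ge> -1" for k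
    by (rule L2_inner_mv[OF assms(3) Ba L2G[OF that]])
  have L2aN: "L2_tor (\<lambda>y. \<xi> \<bullet> (a y *v \<xi>) * N k y)" if "k \<ge> -1" for k
  proof -
    have "L2_tor (\<lambda>y. \<xi> \<bullet> (a y *v (N k y *\<^sub>R \<xi>)))"
    proof (rule L2_inner_mv[OF assms(3) Ba])
      fix l
      have "L2_tor (\<lambda>y. \<xi> $ l * N k y)"
        by (rule L2_bmult[OF _ _ L2N[OF that], of _ "\<bar>\<xi> $ l\<bar>"]) auto
      then show "L2_tor (\<lambda>y. (N k y *\<^sub>R \<xi>) $ l)" by (simp add: mult.commute)
    qed
    moreover have "\<xi> \<bullet> (a y *v (N k y *\<^sub>R \<xi>)) = \<xi> \<bullet> (a y *v \<xi>) * N k y" for y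
      by (simp add: inner_mv_expand sum_distrib_left mult_ac)
    ultimately show ?thesis by simp
  qed
  have L2rN: "L2_tor (\<lambda>y. \<rho> y * N k y)" if "k \<ge> -1" for k
    by (rule L2_bmult[OF assms(4) Br L2N[OF that]])
  define Bq where "Bq k j = (LINT y:cube|lborel. (a y *v G k y) \<bullet> G j y)" for k j
  define Pq where "Pq k j = (LINT y:cube|lborel. N k y * (\<xi> \<bullet> (a y *v G j y)))" for k j
  define Mq where "Mq k j = (LINT y:cube|lborel. \<xi> \<bullet> (a y *v \<xi>) * N k y * N j y)" for k j
  define Rq where "Rq k j = (LINT y:cube|lborel. \<rho> y * N k y * N j y)" for k j
  have E: "Bq k j - Pq j (k-1) + Pq (k-1) j - Mq (k-2) j + \<tau>^2 * Rq (k-2) j = 0"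
    if k: "k \<ge> 1" and j: "j \<ge> 1" for k j
  proof -
    have eq: "\<forall>\<phi> D\<phi>. weak_grad \<phi> D\<phi> \<longrightarrow>
           (LINT y:cube|lborel. (a y *v G k y) \<bullet> D\<phi> y)
           = hm1_pair
               (\<lambda>y. \<xi> \<bullet> (a y *v G (k-1) y) + (\<xi> \<bullet> (a y *v \<xi>) - \<rho> y * \<tau>^2) * N (k-2) y)
               (\<lambda>y. N (k-1) y *\<^sub>R (a y *v \<xi>))
               (\<lambda>y. \<phi> y - tmean \<phi>) D\<phi>" using cell k by blast
    have wj: "weak_grad (N j) (G j)" "tmean (N j) = 0" using cell j by auto
    note eq2 = eq[rule_format, OF wj(1)]
    have f1: "(\<lambda>y. (\<xi> \<bullet> (a y *v G (k-1) y) + (\<xi> \<bullet> (a y *v \<xi>) - \<rho> y * \<tau>^2) * N (k-2) y) * (N j y - tmean (N j)))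
       = (\<lambda>y. N j y * (\<xi> \<bullet> (a y *v G (k-1) y)) + \<xi> \<bullet> (a y *v \<xi>) * N (k-2) y * N j y - \<tau>^2 * (\<rho> y * N (k-2) y * N j y))"
      by (rule ext) (simp add: wj(2) algebra_simps)
    have k1: "k - 1 \<ge> -1" "k - 2 \<ge> -1" using k by auto
    have i1: "set_integrable lborel cube (\<lambda>y. N j y * (\<xi> \<bullet> (a y *v G (k-1) y)))"
      by (rule L2_prod[OF L2N L2aG]) (use j k1 in auto)
    have i2: "set_integrable lborel cube (\<lambda>y. \<xi> \<bullet> (a y *v \<xi>) * N (k-2) y * N j y)"
      by (rule L2_prod[OF L2aN L2N]) (use j k1 in auto)
    have i3: "set_integrable lborel cube (\<lambda>y. \<rho> y * N (k-2) y * N j y)"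
      by (rule L2_prod[OF L2rN L2N]) (use j k1 in auto)
    have I1: "(LINT y:cube|lborel. (\<xi> \<bullet> (a y *v G (k-1) y) + (\<xi> \<bullet> (a y *v \<xi>) - \<rho> y * \<tau>^2) * N (k-2) y) * (N j y - tmean (N j)))
       = Pq j (k-1) + Mq (k-2) j - \<tau>^2 * Rq (k-2) j"
      unfolding f1 Pq_def Mq_def Rq_def
      by (simp add: set_integral_diff(2) set_integral_add(2) set_integral_add(1) i1 i2 i3
            set_integrable_mult_right set_integral_mult_right)
    have f2: "(\<lambda>y. (N (k-1) y *\<^sub>R (a y *v \<xi>)) \<bullet> G j y) = (\<lambda>y. N (k-1) y * (\<xi> \<bullet> (a y *v G j y)))"
    proof (rule ext)
      fix y
      have "G j y \<bullet> (a y *v \<xi>) = \<xi> \<bullet> (a y *v G j y)"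
        by (metis inner_commute mv_sym[OF assms(7)[rule_format]])
      then show "(N (k-1) y *\<^sub>R (a y *v \<xi>)) \<bullet> G j y = N (k-1) y * (\<xi> \<bullet> (a y *v G j y))"
        by (simp add: inner_commute)
    qed
    have I2: "(LINT y:cube|lborel. (N (k-1) y *\<^sub>R (a y *v \<xi>)) \<bullet> G j y) = Pq (k-1) j"
      unfolding f2 Pq_def ..
    have "Bq k j = Pq j (k-1) + Mq (k-2) j - \<tau>^2 * Rq (k-2) j - Pq (k-1) j"
      using eq2 I1 I2 unfolding Bq_def hm1_pair_def by simp
    then show ?thesis by simp
  qed
  have Bs: "Bq k j = Bq j k" for k j
    unfolding Bq_def by (simp add: mv_sym[OF assms(7)[rule_format]])
  have Ms: "Mq k j = Mq j k" for k j
    unfolding Mq_def by (simp add: ac_simps)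
  have Rs: "Rq k j = Rq j k" for k j
    unfolding Rq_def by (simp add: ac_simps)
  have B0: "Bq k 0 = 0" for k unfolding Bq_def by (simp add: G0)
  have P0: "Pq k 0 = 0" for k unfolding Pq_def by (simp add: G0)
  have Mm: "Mq (-1) j = 0" for j unfolding Mq_def by (simp add: Nm1)
  have Rm: "Rq (-1) j = 0" for j unfolding Rq_def by (simp add: Nm1)
  have odd: "odd (2*m+1)" by simp
  have A: "- Pq 0 (int (2*m+1) - 1) - Mq (int (2*m+1) - 2) 0 + \<tau>^2 * Rq (int (2*m+1) - 2) 0 = 0"
    by (rule alg[of Bq Mq Rq Pq "\<tau>^2", OF Bs Ms Rs B0 P0 Mm Rm E odd])
  define n where "n = 2 * int m + 1"
  have nn: "int (2*m+1) = n" unfolding n_def by simp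
  have n1: "n - 1 \<ge> -1" "n - 2 \<ge> -1" unfolding n_def by auto
  have f3: "(\<lambda>y. ((\<rho> y * \<tau>^2 - \<xi> \<bullet> (a y *v \<xi>)) * N (n-2) y - \<xi> \<bullet> (a y *v G (n-1) y)) * 1)
      = (\<lambda>y. \<tau>^2 * (\<rho> y * N (n-2) y * N 0 y) - \<xi> \<bullet> (a y *v \<xi>) * N (n-2) y * N 0 y - N 0 y * (\<xi> \<bullet> (a y *v G (n-1) y)))"
    by (rule ext) (simp add: N0 algebra_simps)
  have j1: "set_integrable lborel cube (\<lambda>y. N 0 y * (\<xi> \<bullet> (a y *v G (n-1) y)))"
    by (rule L2_prod[OF L2N L2aG]) (use n1 in auto)
  have j2: "set_integrable lborel cube (\<lambda>y. \<xi> \<bullet> (a y *v \<xi>) * N (n-2) y * N 0 y)"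
    by (rule L2_prod[OF L2aN L2N]) (use n1 in auto)
  have j3: "set_integrable lborel cube (\<lambda>y. \<rho> y * N (n-2) y * N 0 y)"
    by (rule L2_prod[OF L2rN L2N]) (use n1 in auto)
  have "astar a \<rho> \<tau> \<xi> N G n = - Pq 0 (n - 1) - Mq (n - 2) 0 + \<tau>^2 * Rq (n - 2) 0"
    unfolding astar_def hm1_pair_def f3 Pq_def Mq_def Rq_def
    by (simp add: set_integral_diff(2) set_integral_diff(1) j1 j2 j3
            set_integrable_mult_right set_integral_mult_right)
  then show "astar a \<rho> \<tau> \<xi> N G (2 * int m + 1) = 0" using A unfolding nn n_def by simp
qed

end
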